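(* Let $d\ge 3$, let $\mathcal M$ be a model of $\mathrm{PQM}_d$ with domain $\mathbb M$, and let $\kappa:\mathbb M\to\mathbb H_d$ be the function such that for all $m\in\mathbb M$, $p\in\mathbb H_d$: $[m:p]^{\mathcal M}\iff\kappa(m)\le p$. Then for every $v\in\mathbb V_d$ there exists $m\in\mathbb M$ with $\kappa(m)=v$; i.e. $\mathbb V_d\subseteq\kappa(\mathbb M)$.
   Context: Notation. For $d\ge 1$, $\mathbb H_d$ is the set of complex linear subspaces of $\mathbb C^d$, ordered by inclusion $\le$, with $\top=\mathbb C^d$, $\bot=\{0\}$, $p^\bot$ the orthogonal complement, $p\wedge q=p\cap q$ and $p\vee q=p+q$. $\mathbb V_d\subseteq\mathbb H_d$ is the set of one-dimensional subspaces (rays). $\mathbb U_d$ is the set of unitary operators on $\mathbb C^d$, and for $U\in\mathbb U_d$, $p\in\mathbb H_d$, $U(p)=\{Uv: v\in p\}$. The Sasaki projection is $p\,\&\,q := q\cap(q^\bot+p)$. Subspaces $p,q$ are compatible iff $p=(p\wedge q)\vee(p\wedge q^\bot)$. Language $\mathcal L_d$: a first-order language without equality and without constants, having a unary function symbol $u_U$ for each $U\in\mathbb U_d$, a unary function symbol $\pi_q$ for each $q\in\mathbb H_d$, and a unary relation symbol $[\,\cdot:p]$ for each $p\in\mathbb H_d$. Theory $\mathrm{PQM}_d$ (over $\mathcal L_d$) has the following axioms, for all $p,q\in\mathbb H_d$ and $U\in\mathbb U_d$: ($\neg\bot$) $\exists x\,\neg[x:\bot]$; ($\top$) $\forall x\,[x:\top]$;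 ($\le$) if $p\le q$: $\forall x\,([x:p]\to[x:q])$; ($\wedge$) if $p,q$ are compatible: $\forall x\,([x:p]\wedge[x:q]\to[x:p\wedge q])$; ($\pi_i$) $\forall x\,([x:p]\to[\pi_q(x):p\,\&\,q])$; ($\pi_c$) if $p\le q$: $\forall x\,([\pi_p(\pi_q(x)):\bot]\to[\pi_p(x):\bot])$; ($\pi_\bot$) $\forall x\,([\pi_q(x):\bot]\to[x:q^\bot])$; ($u_i$) $\forall x\,([x:p]\to[u_U(x):U(p)])$; ($u_e$) $\forall x\,([u_U(x):p]\to[x:U^{-1}(p)])$. *)

theory Defs
  imports "HOL-Analysis.Analysis"
begin

text \<open>Ambient space: complex^'n, i.e. C^d with d = CARD('n).\<close>

definition csubspace_vec :: "(complex ^ 'n) set \<Rightarrow> bool" where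
  "csubspace_vec S \<longleftrightarrow> 0 \<in> S \<and> (\<forall>x\<in>S. \<forall>y\<in>S. x + y \<in> S) \<and> (\<forall>c. \<forall>x\<in>S. c *s x \<in> S)"

definition Hd :: "(complex ^ 'n) set set" where
  "Hd = {S. csubspace_vec S}"

definition Vd :: "(complex ^ 'n) set set" where
  "Vd = {S. \<exists>v. v \<noteq> 0 \<and> S = {c *s v | c. True}}"

definition cinner_vec :: "complex ^ 'n \<Rightarrow> complex ^ 'n \<Rightarrow> complex" where
  "cinner_vec x y = (\<Sum>i\<in>UNIV. cnj (x $ i) * y $ i)"

definition ocomp :: "(complex ^ 'n) set \<Rightarrow> (complex ^ 'n) set" where
  "ocomp p = {y. \<forall>x\<in>p. cinner_vec x y = 0}"

definition ssum :: "(complex ^ 'n) set \<Rightarrow> (complex ^ 'n) set \<Rightarrow> (complex ^ 'n) set" where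
  "ssum p q = {x + y | x y. x \<in> p \<and> y \<in> q}"

definition sasaki :: "(complex ^ 'n) set \<Rightarrow> (complex ^ 'n) set \<Rightarrow> (complex ^ 'n) set" where
  "sasaki p q = q \<inter> ssum (ocomp q) p"

definition compatible :: "(complex ^ 'n) set \<Rightarrow> (complex ^ 'n) set \<Rightarrow> bool" where
  "compatible p q \<longleftrightarrow> p = ssum (p \<inter> q) (p \<inter> ocomp q)"

definition adjoint_mat :: "complex ^ 'n ^ 'n \<Rightarrow> complex ^ 'n ^ 'n" where
  "adjoint_mat U = (\<chi> i j. cnj (U $ j $ i))"

definition unitary_mat :: "complex ^ 'n ^ 'n \<Rightarrow> bool" where
  "unitary_mat U \<longleftrightarrow> U ** adjoint_mat U = mat 1 \<and> adjoint_mat U ** U = mat 1"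

definition app_op :: "complex ^ 'n ^ 'n \<Rightarrow> (complex ^ 'n) set \<Rightarrow> (complex ^ 'n) set" where
  "app_op U p = (\<lambda>v. U *v v) ` p"

text \<open>A structure for the language L_d with domain the type 'm:
  rel p x  interprets  [x : p],  proj q  interprets  pi_q,  uu U  interprets  u_U.
  (Symbols are indexed by all p in H_d and all unitary U; values at other indices are irrelevant.)
  PQM_model states that the structure satisfies all axioms of PQM_d.\<close>
definition PQM_model ::
  "((complex ^ 'n) set \<Rightarrow> 'm \<Rightarrow> bool) \<Rightarrow> ((complex ^ 'n) set \<Rightarrow> 'm \<Rightarrow> 'm)
     \<Rightarrow> (complex ^ 'n ^ 'n \<Rightarrow> 'm \<Rightarrow> 'm) \<Rightarrow> bool" where
  "PQM_model rel proj uu \<longleftrightarrow>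
     (\<exists>x. \<not> rel {0} x)
   \<and> (\<forall>x. rel UNIV x)
   \<and> (\<forall>p\<in>Hd. \<forall>q\<in>Hd. p \<subseteq> q \<longrightarrow> (\<forall>x. rel p x \<longrightarrow> rel q x))
   \<and> (\<forall>p\<in>Hd. \<forall>q\<in>Hd. compatible p q \<longrightarrow> (\<forall>x. rel p x \<and> rel q x \<longrightarrow> rel (p \<inter> q) x))
   \<and> (\<forall>p\<in>Hd. \<forall>q\<in>Hd. \<forall>x. rel p x \<longrightarrow> rel (sasaki p q) (proj q x))
   \<and> (\<forall>p\<in>Hd. \<forall>q\<in>Hd. p \<subseteq> q \<longrightarrow> (\<forall>x. rel {0} (proj p (proj q x)) \<longrightarrow> rel {0} (proj p x)))
   \<and> (\<forall>q\<in>Hd. \<forall>x. rel {0} (proj q x) \<longrightarrow> rel (ocomp q) x)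
   \<and> (\<forall>U. unitary_mat U \<longrightarrow> (\<forall>p\<in>Hd. \<forall>x. rel p x \<longrightarrow> rel (app_op U p) (uu U x)))
   \<and> (\<forall>U. unitary_mat U \<longrightarrow> (\<forall>p\<in>Hd. \<forall>x. rel p (uu U x) \<longrightarrow> rel (app_op (matrix_inv U) p) x))"

end

theory Submission
  imports Defs
begin

lemma cinner_add_right: "cinner_vec x (y + z) = cinner_vec x y + cinner_vec x z"
  unfolding cinner_vec_def by (simp add: distrib_left sum.distrib)

lemma cinner_scale_right: "cinner_vec x (c *s y) = c * cinner_vec x y"
  unfolding cinner_vec_def by (simp add: sum_distrib_left algebra_simps)

lemma cinner_zero_right: "cinner_vec x 0 = 0"
  unfolding cinner_vec_def by simp

lemma cinner_self_eq0: "cinner_vec x x = 0 \<Longrightarrow> x = 0"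
proof -
  assume h: "cinner_vec x x = 0"
  have e: "cinner_vec x x = of_real (\<Sum>i\<in>UNIV. (cmod (x $ i))^2)"
    unfolding cinner_vec_def of_real_sum
    by (rule sum.cong) (simp_all add: complex_norm_square mult.commute del: of_real_power)
  hence "complex_of_real (\<Sum>i\<in>UNIV. (cmod (x $ i))^2) = 0" using h by simp
  hence "(\<Sum>i\<in>UNIV. (cmod (x $ i))^2) = 0" by (simp only: of_real_eq_0_iff)
  hence "\<forall>i\<in>UNIV. (cmod (x $ i))^2 = 0"
    by (subst (asm) sum_nonneg_eq_0_iff) auto
  thus "x = 0" by (simp add: vec_eq_iff)
qed

lemma ocomp_sub: "csubspace_vec (ocomp q)"
  unfolding csubspace_vec_def ocomp_def
  by (simp add: cinner_add_right cinner_scale_right cinner_zero_right)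

lemma ssum_sub: "csubspace_vec p \<Longrightarrow> csubspace_vec q \<Longrightarrow> csubspace_vec (ssum p q)"
  unfolding csubspace_vec_def ssum_def
proof (intro conjI ballI allI)
  assume p: "0 \<in> p \<and> (\<forall>x\<in>p. \<forall>y\<in>p. x + y \<in> p) \<and> (\<forall>c. \<forall>x\<in>p. c *s x \<in> p)"
    and q: "0 \<in> q \<and> (\<forall>x\<in>q. \<forall>y\<in>q. x + y \<in> q) \<and> (\<forall>c. \<forall>x\<in>q. c *s x \<in> q)"
  show "0 \<in> {x + y |x y. x \<in> p \<and> y \<in> q}" using p q by force
  fix a b assume a: "a \<in> {x + y |x y. x \<in> p \<and> y \<in> q}" and b: "b \<in> {x + y |x y. x \<in> p \<and> y \<in> q}"
  then obtain x1 y1 x2 y2 where "a = x1 + y1" "b = x2 + y2" "x1 \<in> p" "y1 \<in> q" "x2 \<in> p" "y2 \<in> q" by blast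
  moreover have "a + b = (x1 + x2) + (y1 + y2)" using calculation by (simp add: algebra_simps)
  ultimately show "a + b \<in> {x + y |x y. x \<in> p \<and> y \<in> q}" using p q by blast
next
  fix c a
  assume p: "0 \<in> p \<and> (\<forall>x\<in>p. \<forall>y\<in>p. x + y \<in> p) \<and> (\<forall>c. \<forall>x\<in>p. c *s x \<in> p)"
    and q: "0 \<in> q \<and> (\<forall>x\<in>q. \<forall>y\<in>q. x + y \<in> q) \<and> (\<forall>c. \<forall>x\<in>q. c *s x \<in> q)"
    and a: "a \<in> {x + y |x y. x \<in> p \<and> y \<in> q}"
  then obtain x1 y1 where "a = x1 + y1" "x1 \<in> p" "y1 \<in> q" by blast
  moreover have "c *s a = c *s x1 + c *s y1" using calculation by (simp add: vector_add_ldistrib)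
  moreover have "c *s x1 \<in> p" "c *s y1 \<in> q" using p q calculation by blast+
  ultimately show "c *s a \<in> {x + y |x y. x \<in> p \<and> y \<in> q}" by blast
qed

lemma int_sub: "csubspace_vec p \<Longrightarrow> csubspace_vec q \<Longrightarrow> csubspace_vec (p \<inter> q)"
  unfolding csubspace_vec_def by auto

lemma span_sub: "csubspace_vec {c *s v | c. True}"
  unfolding csubspace_vec_def
proof (intro conjI ballI allI)
  show "0 \<in> {c *s v |c. True}" by (rule CollectI, rule exI[of _ 0]) simp
  fix a b assume "a \<in> {c *s v |c. True}" "b \<in> {c *s v |c. True}"
  then obtain c1 c2 where "a = c1 *s v" "b = c2 *s v" by blast
  hence "a + b = (c1 + c2) *s v" by (simp add: vector_sadd_rdistrib)
  thus "a + b \<in> {c *s v |c. True}" by blast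
next
  fix c a assume "a \<in> {c *s v |c. True}"
  then obtain c1 where "a = c1 *s v" by blast
  hence "c *s a = (c * c1) *s v" by (simp add: vector_smult_assoc)
  thus "c *s a \<in> {c *s v |c. True}" by blast
qed

lemma key:
  fixes rel :: "(complex ^ 'n) set \<Rightarrow> 'm \<Rightarrow> bool"
    and proj :: "(complex ^ 'n) set \<Rightarrow> 'm \<Rightarrow> 'm"
    and uu :: "complex ^ 'n ^ 'n \<Rightarrow> 'm \<Rightarrow> 'm"
    and \<kappa> :: "'m \<Rightarrow> (complex ^ 'n) set"
  assumes M: "PQM_model rel proj uu"
    and H: "\<forall>m. \<kappa> m \<in> Hd"
    and R: "\<forall>m. \<forall>p\<in>Hd. rel p m \<longleftrightarrow> \<kappa> m \<subseteq> p"
    and a: "a \<in> \<kappa> x" and nz: "cinner_vec v a \<noteq> 0"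
  shows "\<exists>m. \<kappa> m = {c *s v | c. True}"
proof -
  let ?q = "{c *s v | c. True}"
  have qH: "?q \<in> Hd" using span_sub unfolding Hd_def by blast
  have kx: "\<kappa> x \<in> Hd" using H by blast
  have sH: "sasaki (\<kappa> x) ?q \<in> Hd"
    using kx qH unfolding Hd_def sasaki_def
    by (simp add: int_sub ssum_sub ocomp_sub)
  have zH: "{0} \<in> Hd" unfolding Hd_def csubspace_vec_def by simp
  have oH: "ocomp ?q \<in> Hd" unfolding Hd_def using ocomp_sub by blast
  have A5: "\<forall>p\<in>Hd. \<forall>q\<in>Hd. \<forall>x. rel p x \<longrightarrow> rel (sasaki p q) (proj q x)"
    by (insert M[unfolded PQM_model_def], elim conjE, assumption)
  have A7: "\<forall>q\<in>Hd. \<forall>x. rel {0} (proj q x) \<longrightarrow> rel (ocomp q) x"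
    by (insert M[unfolded PQM_model_def], elim conjE, assumption)+
  have "rel (\<kappa> x) x" using R kx by blast
  hence "rel (sasaki (\<kappa> x) ?q) (proj ?q x)" using A5 kx qH by blast
  hence "\<kappa> (proj ?q x) \<subseteq> sasaki (\<kappa> x) ?q" using R sH by blast
  hence sub: "\<kappa> (proj ?q x) \<subseteq> ?q" unfolding sasaki_def by blast
  have "\<not> rel (ocomp ?q) x"
  proof
    assume "rel (ocomp ?q) x"
    hence "\<kappa> x \<subseteq> ocomp ?q" using R oH by blast
    hence "a \<in> ocomp ?q" using a by blast
    moreover have "v \<in> ?q" by (rule CollectI, rule exI[of _ 1]) simp
    ultimately show False using nz unfolding ocomp_def by blast
  qed
  hence "\<not> rel {0} (proj ?q x)" using A7 qH by blast
  hence "\<not> \<kappa> (proj ?q x) \<subseteq> {0}" using R zH by blast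
  then obtain b where b: "b \<in> \<kappa> (proj ?q x)" "b \<noteq> 0" by blast
  then obtain c where c: "b = c *s v" using sub by blast
  with b have c0: "c \<noteq> 0" by auto
  have ks: "csubspace_vec (\<kappa> (proj ?q x))" using H unfolding Hd_def by blast
  have "v = inverse c *s b" using c c0 by (simp add: vector_smult_assoc)
  hence "v \<in> \<kappa> (proj ?q x)" using ks b unfolding csubspace_vec_def by metis
  hence "?q \<subseteq> \<kappa> (proj ?q x)" using ks unfolding csubspace_vec_def by blast
  with sub show ?thesis by blast
qed

theorem mainTheorem13:
  fixes rel :: "(complex ^ 'n) set \<Rightarrow> 'm \<Rightarrow> bool"
    and proj :: "(complex ^ 'n) set \<Rightarrow> 'm \<Rightarrow> 'm"
    and uu :: "complex ^ 'n ^ 'n \<Rightarrow> 'm \<Rightarrow> 'm"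
    and \<kappa> :: "'m \<Rightarrow> (complex ^ 'n) set"
  assumes "CARD('n) \<ge> 3"
    and "PQM_model rel proj uu"
    and "\<forall>m. \<kappa> m \<in> Hd"
    and "\<forall>m. \<forall>p\<in>Hd. rel p m \<longleftrightarrow> \<kappa> m \<subseteq> p"
  shows "Vd \<subseteq> \<kappa> ` UNIV"
proof
  fix S :: "(complex ^ 'n) set" assume "S \<in> Vd"
  then obtain v where v: "v \<noteq> 0" "S = {c *s v | c. True}" unfolding Vd_def by blast
  note K = key[OF assms(2) assms(3) assms(4)]
  have "\<exists>x. \<not> rel {0} x" by (insert assms(2)[unfolded PQM_model_def], elim conjE, assumption)
  then obtain x0 where "\<not> rel {0} x0" by blast
  moreover have zH: "{0} \<in> Hd" unfolding Hd_def csubspace_vec_def by simp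
  ultimately have "\<not> \<kappa> x0 \<subseteq> {0}" using assms(4) by blast
  then obtain a where a: "a \<in> \<kappa> x0" "a \<noteq> 0" by blast
  have aa: "cinner_vec a a \<noteq> 0" using a cinner_self_eq0 by blast
  have vv: "cinner_vec v v \<noteq> 0" using v cinner_self_eq0 by blast
  have "\<exists>m. \<kappa> m = S"
  proof (cases "cinner_vec v a = 0")
    case False
    thus ?thesis using K[OF a(1)] v by blast
  next
    case True
    obtain y1 where y1: "\<kappa> y1 = {c *s a | c. True}" using K[OF a(1) aa] by blast
    have ay1: "a \<in> \<kappa> y1" unfolding y1 by (rule CollectI, rule exI[of _ 1]) simp
    have "cinner_vec (a + v) a \<noteq> 0"
      using aa True by (simp add: cinner_vec_def sum.distrib distrib_right)
    then obtain y2 where y2: "\<kappa> y2 = {c *s (a + v) | c. True}" using K[OF ay1] by blast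
    have ay2: "a + v \<in> \<kappa> y2" unfolding y2 by (rule CollectI, rule exI[of _ 1]) simp
    have "cinner_vec v (a + v) \<noteq> 0"
      using vv True by (simp add: cinner_add_right)
    thus ?thesis using K[OF ay2] v by blast
  qed
  thus "S \<in> range \<kappa>" by auto
qed

end
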